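(* For every integer $n\ge 3$ there exists a simple hamiltonian graph on $n$ vertices with maximum degree at most $3$, diameter at most $2\lfloor\log_2 n\rfloor$, and at most $\bigl\lfloor \tfrac{11n}{8}+\tfrac{3}{4}\bigr\rfloor$ edges.
   Context: A graph is hamiltonian if it contains a cycle passing through every vertex exactly once. The diameter of a graph is the maximum over pairs of vertices of their graph distance. *)

theory Defs
  imports Complex_Main
begin

definition simple_graph :: "'a set \<Rightarrow> 'a set set \<Rightarrow> bool" where
  "simple_graph V E \<longleftrightarrow> finite V \<and> (\<forall>e\<in>E. e \<subseteq> V \<and> card e = 2)"

definition adj :: "'a set set \<Rightarrow> 'a \<Rightarrow> 'a \<Rightarrow> bool" where
  "adj E u v \<longleftrightarrow> {u, v} \<in> E"

definition degree :: "'a set set \<Rightarrow> 'a \<Rightarrow> nat" where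
  "degree E v = card {e \<in> E. v \<in> e}"

definition is_walk :: "'a set set \<Rightarrow> 'a list \<Rightarrow> bool" where
  "is_walk E p \<longleftrightarrow> p \<noteq> [] \<and> (\<forall>i. Suc i < length p \<longrightarrow> adj E (p ! i) (p ! Suc i))"

definition dist_le :: "'a set set \<Rightarrow> 'a \<Rightarrow> 'a \<Rightarrow> nat \<Rightarrow> bool" where
  "dist_le E u v d \<longleftrightarrow> (\<exists>p. is_walk E p \<and> hd p = u \<and> last p = v \<and> length p \<le> Suc d)"

definition diameter_le :: "'a set \<Rightarrow> 'a set set \<Rightarrow> nat \<Rightarrow> bool" where
  "diameter_le V E d \<longleftrightarrow> (\<forall>u\<in>V. \<forall>v\<in>V. dist_le E u v d)"

definition hamiltonian :: "'a set \<Rightarrow> 'a set set \<Rightarrow> bool" where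
  "hamiltonian V E \<longleftrightarrow> (\<exists>c. distinct c \<and> set c = V \<and> 3 \<le> length c \<and>
      is_walk E c \<and> adj E (last c) (hd c))"

end

theory Submission
  imports Defs
begin

datatype ty = TP | TH | TQ

definition sh :: "nat \<Rightarrow> nat set set \<Rightarrow> nat set set" where
  "sh k M = (\<lambda>e. (+) k ` e) ` M"

definition rH :: "nat \<Rightarrow> nat" where "rH n = (if n \<le> 2 then 0 else n div 2)"

fun Ch :: "ty \<Rightarrow> nat \<Rightarrow> nat set set" where
"Ch t n = (if n \<le> 2 then {} else (case t of
   TH \<Rightarrow> Ch TP (n div 2) \<union> sh (n div 2 + 1) (Ch TQ ((n-1) div 2))
 | TP \<Rightarrow> Ch TH (n div 2) \<union> sh (n div 2) (Ch TP ((n-1) div 2)) \<union> {{rH (n div 2), n-1}}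
 | TQ \<Rightarrow> sh 1 (Ch TQ (n div 2)) \<union> sh (1 + n div 2) (Ch TH ((n-1) div 2)) \<union> {{0, 1 + n div 2 + rH ((n-1) div 2)}}))"

declare Ch.simps[simp del]

lemma Ch_small: "n \<le> 2 \<Longrightarrow> Ch t n = {}"
  by (subst Ch.simps) simp
lemma Ch_H: "3 \<le> n \<Longrightarrow> Ch TH n = Ch TP (n div 2) \<union> sh (n div 2 + 1) (Ch TQ ((n-1) div 2))"
  by (subst Ch.simps) simp
lemma Ch_P: "3 \<le> n \<Longrightarrow> Ch TP n = Ch TH (n div 2) \<union> sh (n div 2) (Ch TP ((n-1) div 2)) \<union> {{rH (n div 2), n-1}}"
  by (subst Ch.simps) simp
lemma Ch_Q: "3 \<le> n \<Longrightarrow> Ch TQ n = sh 1 (Ch TQ (n div 2)) \<union> sh (1 + n div 2) (Ch TH ((n-1) div 2)) \<union> {{0, 1 + n div 2 + rH ((n-1) div 2)}}"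
  by (subst Ch.simps) simp

definition pairs :: "nat set set \<Rightarrow> nat \<Rightarrow> bool" where
  "pairs M m \<longleftrightarrow> finite M \<and> (\<forall>e\<in>M. \<exists>a b. e = {a,b} \<and> a < b \<and> b < m)"

definition match :: "nat set set \<Rightarrow> bool" where
  "match M \<longleftrightarrow> (\<forall>e\<in>M. \<forall>e'\<in>M. e \<noteq> e' \<longrightarrow> e \<inter> e' = {})"

lemma sh_empty[simp]: "sh k {} = {}" by (simp add: sh_def)
lemma sh_Un: "sh k (A \<union> B) = sh k A \<union> sh k B" by (simp add: sh_def image_Un)
lemma sh_pair[simp]: "(+) k ` {a,b} = {k+a, k+b}" by simp
lemma finite_sh: "finite M \<Longrightarrow> finite (sh k M)" by (simp add: sh_def)
lemma card_sh: "finite M \<Longrightarrow> card (sh k M) \<le> card M"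
  by (auto simp: sh_def card_image_le)
lemma Union_sh: "\<Union>(sh k M) = (+) k ` \<Union>M" by (auto simp: sh_def)

lemma pairs_sub: "pairs M m \<Longrightarrow> \<Union>M \<subseteq> {..<m}"
  unfolding pairs_def by fastforce

lemma pairs_sh: "pairs M m \<Longrightarrow> pairs (sh k M) (k+m)"
  unfolding pairs_def sh_def
  by (auto; fastforce)

lemma pairs_mono: "pairs M m \<Longrightarrow> m \<le> m' \<Longrightarrow> pairs M m'"
  unfolding pairs_def by fastforce

lemma pairs_Un: "pairs A m \<Longrightarrow> pairs B m \<Longrightarrow> pairs (A \<union> B) m"
  unfolding pairs_def by blast

lemma pairs_single: "a < b \<Longrightarrow> b < m \<Longrightarrow> pairs {{a,b}} m"
  unfolding pairs_def by blast

lemma match_Un: "match A \<Longrightarrow> match B \<Longrightarrow> \<Union>A \<inter> \<Union>B = {} \<Longrightarrow> match (A \<union> B)"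
  unfolding match_def by blast

lemma match_single: "match {e}" unfolding match_def by blast

lemma match_sh: assumes "match M" shows "match (sh k M)"
  unfolding match_def
proof (intro ballI impI)
  fix e e' assume "e \<in> sh k M" "e' \<in> sh k M" "e \<noteq> e'"
  then obtain x y where x: "x\<in>M" "e = (+) k ` x" and y: "y \<in> M" "e' = (+) k ` y" by (auto simp: sh_def)
  with \<open>e\<noteq>e'\<close> have "x \<noteq> y" by blast
  with assms x y have "x \<inter> y = {}" by (auto simp: match_def)
  then show "e \<inter> e' = {}" using x y by auto
qed

lemma rH_lt: "1 \<le> n \<Longrightarrow> rH n < n" by (simp add: rH_def)

lemma split_facts:
  fixes n :: nat assumes "3 \<le> n"
  shows "n div 2 < n" "(n-1) div 2 < n" "1 \<le> n div 2" "1 \<le> (n-1) div 2"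
        "n div 2 + (n-1) div 2 + 1 = n" "(n-1) div 2 \<le> n div 2"
  using assms by presburger+

lemma inv: "pairs (Ch t n) n \<and> match (Ch t n) \<and> (t = TH \<longrightarrow> rH n \<notin> \<Union>(Ch t n))"
proof (induction n arbitrary: t rule: less_induct)
  case (less n)
  show ?case
  proof (cases "n \<le> 2")
    case True then show ?thesis by (simp add: Ch_small pairs_def match_def)
  next
    case False
    hence n3: "3 \<le> n" by simp
    define n1 where "n1 = n div 2"
    define n2 where "n2 = (n-1) div 2"
    note sf = split_facts[OF n3, folded n1_def n2_def]
    have I1: "pairs (Ch t n1) n1" "match (Ch t n1)" for t using less.IH[OF sf(1)] by auto
    have I2: "pairs (Ch t n2) n2" "match (Ch t n2)" for t using less.IH[OF sf(2)] by auto
    have R1: "rH n1 \<notin> \<Union>(Ch TH n1)" "rH n2 \<notin> \<Union>(Ch TH n2)" 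
      using less.IH[OF sf(1), of TH] less.IH[OF sf(2), of TH] by auto
    have S1: "\<Union>(Ch t n1) \<subseteq> {..<n1}" for t using pairs_sub[OF I1(1)[of t]] .
    have S2: "\<Union>(sh k (Ch t n2)) \<subseteq> {k..<k+n2}" for t k 
      using pairs_sub[OF I2(1)[of t]] by (auto simp: Union_sh)
    have S1': "\<Union>(sh k (Ch t n1)) \<subseteq> {k..<k+n1}" for t k 
      using pairs_sub[OF I1(1)[of t]] by (auto simp: Union_sh)
    have X1: "e \<in> Ch t n1 \<Longrightarrow> x \<in> e \<Longrightarrow> x < n1" for x e t using S1[of t] by blast
    have X2: "e \<in> sh k (Ch t n2) \<Longrightarrow> x \<in> e \<Longrightarrow> k \<le> x \<and> x < k + n2" for x e t k using S2[of k t] by (meson UnionI atLeastLessThan_iff subsetD)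
    have X1': "e \<in> sh k (Ch t n1) \<Longrightarrow> x \<in> e \<Longrightarrow> k \<le> x \<and> x < k + n1" for x e t k using S1'[of k t] by (meson UnionI atLeastLessThan_iff subsetD)
    have rl: "rH n1 < n1" "rH n2 < n2" using sf rH_lt by auto
    show ?thesis
    proof (cases t)
      case TH
      have C: "Ch TH n = Ch TP n1 \<union> sh (n1+1) (Ch TQ n2)" using Ch_H[OF n3] n1_def n2_def by simp
      have rn: "rH n = n1" using n3 by (simp add: rH_def n1_def)
      have p: "pairs (Ch TH n) n" unfolding C
        apply (rule pairs_Un)
         apply (rule pairs_mono[OF I1(1)]) using sf apply simp
        apply (rule pairs_mono[OF pairs_sh[OF I2(1)]]) using sf apply simp
        done
      have m: "match (Ch TH n)" unfolding C
        apply (rule match_Un[OF I1(2) match_sh[OF I2(2)]])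
        using sf by (auto dest!: X1 X2)
      have r: "rH n \<notin> \<Union>(Ch TH n)" unfolding C rn
        using sf by (auto dest!: X1 X2)
      show ?thesis using p m r TH by simp
    next
      case TP
      have C: "Ch TP n = Ch TH n1 \<union> sh n1 (Ch TP n2) \<union> {{rH n1, n-1}}" using Ch_P[OF n3] n1_def n2_def by simp
      have p: "pairs (Ch TP n) n" unfolding C
        apply (intro pairs_Un)
          apply (rule pairs_mono[OF I1(1)]) using sf apply simp
         apply (rule pairs_mono[OF pairs_sh[OF I2(1)]]) using sf apply simp
        apply (rule pairs_single) using sf rl apply simp_all
        done
      have m: "match (Ch TP n)" unfolding C
        apply (intro match_Un match_single I1(2) match_sh I2(2))
        using R1 rl sf by (auto dest!: X1 X2)
      show ?thesis using p m TP by simp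
    next
      case TQ
      have C: "Ch TQ n = sh 1 (Ch TQ n1) \<union> sh (1 + n1) (Ch TH n2) \<union> {{0, 1 + n1 + rH n2}}" using Ch_Q[OF n3] n1_def n2_def by simp
      have p: "pairs (Ch TQ n) n" unfolding C
        apply (intro pairs_Un)
          apply (rule pairs_mono[OF pairs_sh[OF I1(1)]]) using sf apply simp
         apply (rule pairs_mono[OF pairs_sh[OF I2(1)]]) using sf apply simp
        apply (rule pairs_single) using sf rl apply simp_all
        done
      have R2: "e \<in> sh (1+n1) (Ch TH n2) \<Longrightarrow> Suc (n1 + rH n2) \<notin> e" for e
        using R1(2) by (auto simp: sh_def)
      have m: "match (Ch TQ n)" unfolding C
        apply (intro match_Un match_single I1(2) match_sh I2(2))
        using R2 rl sf by (auto dest!: X1' X2 dest: R2)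
      show ?thesis using p m TQ by simp
    qed
  qed
qed

lemma finCh: "finite (Ch t n)" using inv[of t n] by (simp add: pairs_def)

lemma card_Ch: "(t = TH \<longrightarrow> 2 \<le> n \<longrightarrow> 8 * card (Ch t n) + 5 \<le> 3*n) \<and> (t \<noteq> TH \<longrightarrow> 1 \<le> n \<longrightarrow> 8 * card (Ch t n) + 1 \<le> 3*n)"
proof (induction n arbitrary: t rule: less_induct)
  case (less n)
  show ?case
  proof (cases "n \<le> 2")
    case True then show ?thesis by (auto simp add: Ch_small)
  next
    case False
    hence n3: "3 \<le> n" by simp
    define n1 where "n1 = n div 2"
    define n2 where "n2 = (n-1) div 2"
    note sf = split_facts[OF n3, folded n1_def n2_def]
    have IH1: "2 \<le> n1 \<Longrightarrow> 8 * card (Ch TH n1) + 5 \<le> 3*n1" "8 * card (Ch TP n1) + 1 \<le> 3*n1" "8 * card (Ch TQ n1) + 1 \<le> 3*n1"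
      using less.IH[OF sf(1), of TH] less.IH[OF sf(1), of TP] less.IH[OF sf(1), of TQ] sf by auto
    have IH2: "2 \<le> n2 \<Longrightarrow> 8 * card (Ch TH n2) + 5 \<le> 3*n2" "8 * card (Ch TP n2) + 1 \<le> 3*n2" "8 * card (Ch TQ n2) + 1 \<le> 3*n2"
      using less.IH[OF sf(2), of TH] less.IH[OF sf(2), of TP] less.IH[OF sf(2), of TQ] sf by auto
    have cs: "card (sh k (Ch t m)) \<le> card (Ch t m)" for k t m using card_sh[OF finCh] .
    have cu: "card (A \<union> B) \<le> card A + card B" for A B :: "nat set set" by (rule card_Un_le)
    show ?thesis
    proof (cases t)
      case TH
      have C: "Ch TH n = Ch TP n1 \<union> sh (n1+1) (Ch TQ n2)" using Ch_H[OF n3] n1_def n2_def by simp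
      have "card (Ch TH n) \<le> card (Ch TP n1) + card (Ch TQ n2)"
        unfolding C using cu cs order_trans add_mono by (meson le_refl)
      then have "8 * card (Ch TH n) + 5 \<le> 3*n" using IH1 IH2 sf by linarith
      then show ?thesis using TH by simp
    next
      case TP
      have C: "Ch TP n = Ch TH n1 \<union> sh n1 (Ch TP n2) \<union> {{rH n1, n-1}}" using Ch_P[OF n3] n1_def n2_def by simp
      have "card (Ch TP n) \<le> card (Ch TH n1) + card (Ch TP n2) + 1"
      proof -
        have "card (Ch TP n) \<le> card (Ch TH n1 \<union> sh n1 (Ch TP n2)) + card {{rH n1, n-1}}"
          unfolding C by (rule cu)
        also have "\<dots> \<le> card (Ch TH n1) + card (sh n1 (Ch TP n2)) + 1"
          using cu by (simp add: add_mono)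
        also have "\<dots> \<le> card (Ch TH n1) + card (Ch TP n2) + 1" using cs by simp
        finally show ?thesis .
      qed
      note b = this
      have "8 * card (Ch TP n) + 1 \<le> 3*n"
      proof (cases "5 \<le> n")
        case True then have "2 \<le> n1" using sf by linarith
        then show ?thesis using b IH1(1) IH2(2) sf by linarith
      next
        case False then have "n1 \<le> 2" "n2 \<le> 2" using sf by linarith+
        then have "Ch TH n1 = {}" "Ch TP n2 = {}" by (simp_all add: Ch_small)
        then show ?thesis using b n3 by simp
      qed
      then show ?thesis using TP by simp
    next
      case TQ
      have C: "Ch TQ n = sh 1 (Ch TQ n1) \<union> sh (1 + n1) (Ch TH n2) \<union> {{0, 1 + n1 + rH n2}}" using Ch_Q[OF n3] n1_def n2_def by simp
      have "card (Ch TQ n) \<le> card (Ch TQ n1) + card (Ch TH n2) + 1"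
      proof -
        have "card (Ch TQ n) \<le> card (sh 1 (Ch TQ n1) \<union> sh (1 + n1) (Ch TH n2)) + card {{0, 1 + n1 + rH n2}}"
          unfolding C by (rule cu)
        also have "\<dots> \<le> card (sh 1 (Ch TQ n1)) + card (sh (1 + n1) (Ch TH n2)) + 1"
          using cu by (simp add: add_mono)
        also have "\<dots> \<le> card (Ch TQ n1) + card (Ch TH n2) + 1" using cs add_mono by (meson add_le_mono1)
        finally show ?thesis .
      qed
      note b = this
      have "8 * card (Ch TQ n) + 1 \<le> 3*n"
      proof (cases "5 \<le> n")
        case True then have "2 \<le> n2" unfolding n2_def by presburger
        then show ?thesis using b IH1(3) IH2(1) sf by linarith
      next
        case False then have "n1 \<le> 2" "n2 \<le> 2" using sf by linarith+
        then have "Ch TQ n1 = {}" "Ch TH n2 = {}" by (simp_all add: Ch_small)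
        then show ?thesis using b n3 by simp
      qed
      then show ?thesis using TQ by simp
    qed
  qed
qed

inductive reach :: "nat set set \<Rightarrow> nat \<Rightarrow> nat \<Rightarrow> nat \<Rightarrow> bool" for E where
  rrefl: "reach E u u d"
| rstep: "adj E u w \<Longrightarrow> reach E w v d \<Longrightarrow> reach E u v (Suc d)"

lemma reach_mono_d: "reach E u v d \<Longrightarrow> d \<le> d' \<Longrightarrow> reach E u v d'"
proof (induction arbitrary: d' rule: reach.induct)
  case (rrefl u d) show ?case by (rule reach.rrefl)
next
  case (rstep u w v d)
  then obtain d'' where "d' = Suc d''" "d \<le> d''" by (cases d') auto
  then show ?case using rstep by (auto intro: reach.rstep)
qed

lemma reach_mono_E: "reach E u v d \<Longrightarrow> E \<subseteq> E' \<Longrightarrow> reach E' u v d"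
proof (induction rule: reach.induct)
  case (rrefl u d) show ?case by (rule reach.rrefl)
next
  case (rstep u w v d)
  have "adj E' u w" using rstep(1,4) by (auto simp: adj_def)
  moreover have "reach E' w v d" using rstep(3,4) by simp
  ultimately show ?case by (rule reach.rstep)
qed

lemma reach_sh: "reach E u v d \<Longrightarrow> reach (sh k E) (k+u) (k+v) d"
proof (induction rule: reach.induct)
  case (rrefl u d) then show ?case by (rule reach.rrefl)
next
  case (rstep u w v d)
  have "{k+u, k+w} \<in> sh k E" using rstep(1) unfolding adj_def sh_def
    by (metis sh_pair image_eqI)
  then show ?case using rstep(3) by (auto intro: reach.rstep simp: adj_def)
qed

lemma reach_trans: "reach E u v a \<Longrightarrow> reach E v w b \<Longrightarrow> reach E u w (a+b)"
proof (induction arbitrary: w b rule: reach.induct)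
  case (rrefl u d) then show ?case using reach_mono_d by fastforce
next
  case (rstep u x v d) then show ?case by (auto intro: reach.rstep)
qed

lemma reach_adj: "adj E u v \<Longrightarrow> reach E u v (Suc d)"
  by (auto intro: reach.intros)

lemma adj_sym: "adj E u v \<Longrightarrow> adj E v u" by (simp add: adj_def insert_commute)

lemma reach_snoc: "reach E u v d \<Longrightarrow> adj E v w \<Longrightarrow> reach E u w (Suc d)"
  using reach_trans[of E u v d w 1] reach_adj[of E v w 0] by simp

lemma reach_sym: "reach E u v d \<Longrightarrow> reach E v u d"
proof (induction rule: reach.induct)
  case (rrefl u d) then show ?case by (rule reach.rrefl)
next
  case (rstep u w v d) then show ?case using reach_snoc[OF rstep(3) adj_sym[OF rstep(1)]] by blast
qed

lemma reach_dist: "reach E u v d \<Longrightarrow> dist_le E u v d"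
proof (induction rule: reach.induct)
  case (rrefl u d) then show ?case unfolding dist_le_def is_walk_def
    by (intro exI[of _ "[u]"]) simp
next
  case (rstep u w v d)
  then obtain p where p: "is_walk E p" "hd p = w" "last p = v" "length p \<le> Suc d"
    unfolding dist_le_def by blast
  have pne: "p \<noteq> []" using p(1) by (simp add: is_walk_def)
  have "is_walk E (u # p)" unfolding is_walk_def
  proof (intro conjI allI impI)
    fix i assume "Suc i < length (u # p)"
    then show "adj E ((u # p) ! i) ((u # p) ! Suc i)"
      using p rstep(1) unfolding is_walk_def
      by (cases i) (auto simp: hd_conv_nth)
  qed simp
  then show ?case unfolding dist_le_def using p pne
    by (intro exI[of _ "u # p"]) auto
qed

definition pe :: "nat \<Rightarrow> nat set set" where "pe n = {{i, Suc i} | i. Suc i < n}"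
definition L :: "ty \<Rightarrow> nat \<Rightarrow> nat set set" where "L t n = pe n \<union> Ch t n"
fun root :: "ty \<Rightarrow> nat \<Rightarrow> nat" where
  "root TP n = n - 1" | "root TQ n = 0" | "root TH n = rH n"

lemma pe_mono: "m \<le> n \<Longrightarrow> pe m \<subseteq> pe n" unfolding pe_def by auto
lemma sh_pe: "sh k (pe m) \<subseteq> pe (k+m)" unfolding pe_def sh_def by force
lemma sh_mono: "A \<subseteq> B \<Longrightarrow> sh k A \<subseteq> sh k B" unfolding sh_def by auto
lemma sh_L: assumes "k + m \<le> n" "sh k (Ch t m) \<subseteq> C" shows "sh k (L t m) \<subseteq> pe n \<union> C"
proof -
  have "sh k (pe m) \<subseteq> pe n" using sh_pe[of k m] pe_mono[OF assms(1)] by (rule order_trans)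
  then show ?thesis using assms(2) unfolding L_def sh_Un by (rule Un_mono[THEN order_trans]) simp
qed
lemma adj_pe: assumes "Suc i < n" "pe n \<subseteq> E" shows "adj E i (Suc i)"
proof -
  have "{i, Suc i} \<in> pe n" unfolding pe_def using assms(1) by auto
  then show ?thesis using assms(2) unfolding adj_def by blast
qed
lemma adj_pe': "Suc i < n \<Longrightarrow> pe n \<subseteq> E \<Longrightarrow> adj E (Suc i) i"
  using adj_sym[OF adj_pe] by blast

lemma reach_main: "n < 2^Suc d \<Longrightarrow> i < n \<Longrightarrow> reach (L t n) (root t n) i d"
proof (induction n arbitrary: t d i rule: less_induct)
  case (less n)
  have peL: "pe n \<subseteq> L t n" for t by (simp add: L_def)
  show ?case
  proof (cases "n \<le> 2")
    case True
    show ?thesis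
    proof (cases "i = root t n")
      case True then show ?thesis by (simp add: reach.rrefl)
    next
      case False
      have n2: "n = 2" using True False less.prems by (cases t) (auto simp: rH_def)
      have "d \<noteq> 0" using less.prems(1) n2 by (cases d) auto
      then obtain d' where d: "d = Suc d'" by (cases d) auto
      have "root t n < 2" using n2 by (cases t) (auto simp: rH_def)
      then have "root t n = 0 \<and> i = 1 \<or> root t n = 1 \<and> i = 0" using False less.prems(2) n2 by auto
      then have "adj (L t n) (root t n) i" using n2 adj_pe[OF _ peL, of 0 t] adj_pe'[OF _ peL, of 0 t]
        by auto
      then show ?thesis unfolding d by (rule reach.rstep) (rule reach.rrefl)
    qed
  next
    case False
    hence n3: "3 \<le> n" by simp
    define n1 where "n1 = n div 2"
    define n2 where "n2 = (n-1) div 2"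
    note sf = split_facts[OF n3, folded n1_def n2_def]
    have "d \<noteq> 0" using less.prems(1) n3 by (cases d) auto
    then obtain d' where d: "d = Suc d'" by (cases d) auto
    have "n < 2 * 2^Suc d'" using less.prems(1) d by simp
    then have n1d: "n1 < 2^Suc d'" unfolding n1_def by (simp add: less_mult_imp_div_less mult.commute)
    have n2d: "n2 < 2^Suc d'" using n1d sf by linarith
    have IH1: "i < n1 \<Longrightarrow> reach (L t n1) (root t n1) i d'" for t i using less.IH[OF sf(1) n1d] by blast
    have IH2: "i < n2 \<Longrightarrow> reach (L t n2) (root t n2) i d'" for t i using less.IH[OF sf(2) n2d] by blast
    have rl: "rH n1 < n1" "rH n2 < n2" using sf rH_lt by auto
    show ?thesis
    proof (cases t)
      case TH
      have C: "Ch TH n = Ch TP n1 \<union> sh (n1+1) (Ch TQ n2)" using Ch_H[OF n3] n1_def n2_def by simp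
      have rn: "root TH n = n1" using n3 by (simp add: rH_def n1_def)
      have sub1: "L TP n1 \<subseteq> L TH n" unfolding L_def C using pe_mono[OF less_imp_le[OF sf(1)]] by blast
      have sub2: "sh (n1+1) (L TQ n2) \<subseteq> L TH n"
      proof -
        have "sh (n1+1) (L TQ n2) \<subseteq> pe n \<union> Ch TH n" by (rule sh_L) (use sf in \<open>auto simp: C\<close>)
        then show ?thesis by (simp add: L_def)
      qed
      consider "i < n1" | "i = n1" | "n1 < i" by linarith
      then show ?thesis
      proof cases
        case 1
        have "reach (L TH n) (n1 - 1) i d'" using reach_mono_E[OF IH1[OF 1, of TP] sub1] by simp
        moreover have "adj (L TH n) n1 (n1 - 1)" using adj_pe'[OF _ peL, of "n1 - 1" TH] sf by simp
        ultimately show ?thesis unfolding TH rn d by (intro reach.rstep)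
      next
        case 2 then show ?thesis using rn by (simp add: reach.rrefl TH)
      next
        case 3
        define j where "j = i - (n1 + 1)"
        have j: "j < n2" "i = (n1+1) + j" using 3 less.prems(2) sf unfolding j_def by linarith+
        have "reach (L TH n) ((n1+1) + 0) i d'" using reach_mono_E[OF reach_sh[OF IH2[OF j(1), of TQ]] sub2] j by simp
        moreover have "adj (L TH n) n1 (Suc n1)" using adj_pe[OF _ peL, of n1 TH] sf by simp
        ultimately show ?thesis unfolding TH rn d by (intro reach.rstep) simp_all
      qed
    next
      case TP
      have C: "Ch TP n = Ch TH n1 \<union> sh n1 (Ch TP n2) \<union> {{rH n1, n-1}}" using Ch_P[OF n3] n1_def n2_def by simp
      have rn: "root TP n = n - 1" by simp
      have sub1: "L TH n1 \<subseteq> L TP n" unfolding L_def C using pe_mono[OF less_imp_le[OF sf(1)]] by blast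
      have sub2: "sh n1 (L TP n2) \<subseteq> L TP n"
      proof -
        have "sh n1 (L TP n2) \<subseteq> pe n \<union> Ch TP n" by (rule sh_L) (use sf in \<open>auto simp: C\<close>)
        then show ?thesis by (simp add: L_def)
      qed
      have ch: "adj (L TP n) (n-1) (rH n1)" unfolding adj_def L_def C by (simp add: insert_commute)
      consider "i < n1" | "n1 \<le> i" "i < n - 1" | "i = n - 1" using less.prems(2) by linarith
      then show ?thesis
      proof cases
        case 1
        have "reach (L TP n) (rH n1) i d'" using reach_mono_E[OF IH1[OF 1, of TH] sub1] by simp
        then show ?thesis unfolding TP rn d using ch by (intro reach.rstep)
      next
        case 2
        define j where "j = i - n1"
        have j: "j < n2" "i = n1 + j" using 2 sf unfolding j_def by linarith+
        have "reach (L TP n) (n1 + (n2 - 1)) i d'" using reach_mono_E[OF reach_sh[OF IH2[OF j(1), of TP]] sub2] j by simp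
        moreover have "n1 + (n2 - 1) = n - 2" using sf by linarith
        moreover have "adj (L TP n) (n-1) (n-2)" using adj_pe'[OF _ peL, of "n - 2" TP] sf
          by (simp add: Suc_diff_Suc numeral_2_eq_2)
        ultimately show ?thesis unfolding TP rn d by (intro reach.rstep) simp_all
      next
        case 3 then show ?thesis using rn by (simp add: reach.rrefl TP)
      qed
    next
      case TQ
      have C: "Ch TQ n = sh 1 (Ch TQ n1) \<union> sh (1 + n1) (Ch TH n2) \<union> {{0, 1 + n1 + rH n2}}" using Ch_Q[OF n3] n1_def n2_def by simp
      have rn: "root TQ n = 0" by simp
      have sub1: "sh 1 (L TQ n1) \<subseteq> L TQ n"
      proof -
        have "sh 1 (L TQ n1) \<subseteq> pe n \<union> Ch TQ n" by (rule sh_L) (use sf in \<open>auto simp: C\<close>)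
        then show ?thesis by (simp add: L_def)
      qed
      have sub2: "sh (1+n1) (L TH n2) \<subseteq> L TQ n"
      proof -
        have "sh (1+n1) (L TH n2) \<subseteq> pe n \<union> Ch TQ n" by (rule sh_L) (use sf in \<open>auto simp: C\<close>)
        then show ?thesis by (simp add: L_def)
      qed
      have ch: "adj (L TQ n) 0 (1 + n1 + rH n2)" unfolding adj_def L_def C by simp
      consider "i = 0" | "0 < i" "i < 1 + n1" | "1 + n1 \<le> i" by linarith
      then show ?thesis
      proof cases
        case 1 then show ?thesis using rn by (simp add: reach.rrefl TQ)
      next
        case 2
        define j where "j = i - 1"
        have j: "j < n1" "i = 1 + j" using 2 unfolding j_def by linarith+
        have "reach (L TQ n) (1 + 0) i d'" using reach_mono_E[OF reach_sh[OF IH1[OF j(1), of TQ]] sub1] j by simp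
        moreover have "adj (L TQ n) 0 1" using adj_pe[OF _ peL, of 0 TQ] sf by simp
        ultimately show ?thesis unfolding TQ rn d by (intro reach.rstep) simp_all
      next
        case 3
        define j where "j = i - (1 + n1)"
        have j: "j < n2" "i = (1 + n1) + j" using 3 less.prems(2) sf unfolding j_def by linarith+
        have "reach (L TQ n) (1 + n1 + rH n2) i d'" using reach_mono_E[OF reach_sh[OF IH2[OF j(1), of TH]] sub2] j by simp
        then show ?thesis unfolding TQ rn d using ch by (intro reach.rstep)
      qed
    qed
  qed
qed



lemma log_bound:
  fixes n :: nat assumes "n \<ge> 1"
  shows "n < 2 ^ Suc (nat \<lfloor>log 2 (real n)\<rfloor>)"
proof -
  have "log 2 (real n) \<ge> 0" using assms by simp
  then have "\<lfloor>log 2 (real n)\<rfloor> = int (nat \<lfloor>log 2 (real n)\<rfloor>)" by simp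
  then have "2 ^ (nat \<lfloor>log 2 (real n)\<rfloor>) \<le> n \<and> n < 2 ^ (nat \<lfloor>log 2 (real n)\<rfloor> + 1)"
    using floor_log_nat_eq_powr_iff[of 2 n "nat \<lfloor>log 2 (real n)\<rfloor>"] assms by simp
  then show ?thesis by simp
qed

theorem mainTheorem6:
  fixes n :: nat
  assumes "n \<ge> 3"
  shows "\<exists>E :: nat set set.
           simple_graph {0..<n} E \<and>
           hamiltonian {0..<n} E \<and>
           (\<forall>v\<in>{0..<n}. degree E v \<le> 3) \<and>
           diameter_le {0..<n} E (2 * nat \<lfloor>log 2 (real n)\<rfloor>) \<and>
           card E \<le> nat \<lfloor>11 * real n / 8 + 3 / 4\<rfloor>"
proof -
  define M where "M = Ch TH n"
  define C where "C = (\<lambda>i. {i, Suc i mod n}) ` {..<n}"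
  define E where "E = C \<union> M"
  have n0: "0 < n" using assms by simp
  have peC: "pe n \<subseteq> C"
  proof
    fix e assume "e \<in> pe n"
    then obtain i where i: "e = {i, Suc i}" "Suc i < n" unfolding pe_def by blast
    then have "e = {i, Suc i mod n}" "i \<in> {..<n}" by simp_all
    then show "e \<in> C" unfolding C_def by (rule image_eqI)
  qed
  have LE: "L TH n \<subseteq> E" unfolding L_def E_def M_def using peC by blast
  have invM: "pairs M n" "match M" using inv[of TH n] by (simp_all add: M_def)
  have finM: "finite M" using invM by (simp add: pairs_def)
  have finC: "finite C" unfolding C_def by simp
  have sg0: "\<forall>e\<in>E. e \<subseteq> {0..<n} \<and> card e = 2"
  proof
    fix e assume "e \<in> E"
    then consider "e \<in> C" | "e \<in> M" unfolding E_def by blast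
    then show "e \<subseteq> {0..<n} \<and> card e = 2"
    proof cases
      case 1
      then obtain i where i: "i < n" "e = {i, Suc i mod n}" unfolding C_def by blast
      have "i \<noteq> Suc i mod n"
      proof (cases "Suc i < n")
        case True then show ?thesis by simp
      next
        case False then have "Suc i = n" using i by simp
        then show ?thesis using assms by auto
      qed
      then show ?thesis using i n0 by auto
    next
      case 2
      then obtain a b where "e = {a,b}" "a < b" "b < n" using invM unfolding pairs_def by blast
      then show ?thesis by auto
    qed
  qed
  have sg: "simple_graph {0..<n} E" using sg0 by (simp add: simple_graph_def)
  have ham: "hamiltonian {0..<n} E"
    unfolding hamiltonian_def
  proof (intro exI[of _ "[0..<n]"] conjI)
    show "distinct [0..<n]" by simp
    show "set [0..<n] = {0..<n}" by simp
    show "3 \<le> length [0..<n]" using assms by simp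
    show "is_walk E [0..<n]" unfolding is_walk_def
    proof (intro conjI allI impI)
      show "[0..<n] \<noteq> []" using n0 by simp
      fix i assume "Suc i < length [0..<n]"
      then have "Suc i < n" by simp
      moreover have "pe n \<subseteq> E" using peC unfolding E_def by blast
      ultimately have "adj E i (Suc i)" by (rule adj_pe)
      then show "adj E ([0..<n] ! i) ([0..<n] ! Suc i)"
        using \<open>Suc i < n\<close> by (simp del: upt_Suc)
    qed
    have "n - 1 \<in> {..<n}" using n0 by simp
    then have "{n - 1, Suc (n-1) mod n} \<in> C" unfolding C_def by (rule imageI)
    then show "adj E (last [0..<n]) (hd [0..<n])" unfolding adj_def E_def using n0 by simp
  qed
  have deg: "degree E v \<le> 3" if v: "v \<in> {0..<n}" for v
  proof -
    define Cv where "Cv = {{v, Suc v mod n}, {(v + n - 1) mod n, v}}"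
    have s1: "{e \<in> E. v \<in> e} \<subseteq> Cv \<union> {e \<in> M. v \<in> e}"
    proof
      fix e assume e: "e \<in> {e \<in> E. v \<in> e}"
      show "e \<in> Cv \<union> {e \<in> M. v \<in> e}"
      proof (cases "e \<in> M")
        case True then show ?thesis using e by blast
      next
        case False
        then have "e \<in> C" using e unfolding E_def by blast
        then obtain i where i: "i < n" "e = {i, Suc i mod n}" unfolding C_def by blast
        have "v \<in> {i, Suc i mod n}" using e i by simp
        then have "v = i \<or> v = Suc i mod n" by simp
        then show ?thesis
        proof
          assume "v = i" then show ?thesis using i unfolding Cv_def by simp
        next
          assume vi: "v = Suc i mod n"
          have "i = (v + n - 1) mod n"
          proof (cases "Suc i < n")
            case True
            then have "v = Suc i" using vi by simp
            then have "v + n - 1 = i + n" by simp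
            then show ?thesis using i by simp
          next
            case False then have sn: "Suc i = n" using i by simp
            then have "v = 0" using vi by simp
            then have "v + n - 1 = i" using sn by simp
            then show ?thesis using i by simp
          qed
          then show ?thesis using i vi unfolding Cv_def by simp
        qed
      qed
    qed
    have c1: "card Cv \<le> 2" unfolding Cv_def by (simp add: card_insert_if)
    have c2: "card {e \<in> M. v \<in> e} \<le> 1"
    proof -
      have fin: "finite {e \<in> M. v \<in> e}" using finM by simp
      have "\<forall>a\<in>{e \<in> M. v \<in> e}. \<forall>b\<in>{e \<in> M. v \<in> e}. a = b" using invM(2) unfolding match_def by blast
      then show ?thesis using card_le_Suc0_iff_eq[OF fin] by simp
    qed
    have "degree E v \<le> card (Cv \<union> {e \<in> M. v \<in> e})"
      unfolding degree_def
    proof (rule card_mono)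
      show "finite (Cv \<union> {e \<in> M. v \<in> e})" using finM by (simp add: Cv_def)
    qed (rule s1)
    also have "\<dots> \<le> card Cv + card {e \<in> M. v \<in> e}" by (rule card_Un_le)
    finally show ?thesis using c1 c2 by simp
  qed
  define k where "k = nat \<lfloor>log 2 (real n)\<rfloor>"
  have nk: "n < 2 ^ Suc k" unfolding k_def using log_bound assms by simp
  have rr: "reach E (rH n) u k" if "u < n" for u
    using reach_mono_E[OF reach_main[OF nk that, of TH] LE] by simp
  have diam: "diameter_le {0..<n} E (2 * k)"
    unfolding diameter_le_def
  proof (intro ballI)
    fix u v assume "u \<in> {0..<n}" "v \<in> {0..<n}"
    then have "reach E u v (k + k)" using reach_trans[OF reach_sym[OF rr] rr] by simp
    then show "dist_le E u v (2 * k)" using reach_dist by (simp add: mult_2)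
  qed
  have cM: "8 * card M + 5 \<le> 3 * n" using card_Ch[of TH n] assms by (simp add: M_def)
  have "card E \<le> card C + card M" unfolding E_def by (rule card_Un_le)
  also have "card C \<le> n" unfolding C_def using card_image_le[of "{..<n}"] by simp
  finally have cE: "card E \<le> n + card M" by simp
  have "real (n + card M) \<le> 11 * real n / 8 + 3 / 4"
  proof -
    have "real (8 * card M + 5) \<le> real (3 * n)" using cM by linarith
    then show ?thesis by simp
  qed
  then have "n + card M \<le> nat \<lfloor>11 * real n / 8 + 3 / 4\<rfloor>" by (rule le_nat_floor)
  then have cc: "card E \<le> nat \<lfloor>11 * real n / 8 + 3 / 4\<rfloor>" using cE by linarith
  show ?thesis using sg ham deg diam cc unfolding k_def by blast
qed

end
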